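(* Let $m\ge1$, $\mu>0$, $\sigma\ge0$, $r=\sigma/\mu$, and let $B$ be the mechanism that offers the bundle of all $m$ items at a single random price drawn from the log-lottery $P^{\log}_{m\mu,\sqrt m\sigma}$. Then for every product distribution $F=F_1\times\cdots\times F_m$ in which each $F_j$ has mean $\mu$ and standard deviation at most $\sigma$, \[\frac{\mathrm{OPT}(F)}{\mathrm{REV}(B;F)}\le\rho\!\left(\frac{r}{\sqrt m}\right).\]
   Context: One buyer with additive valuation for $m$ items with values $(v_1,\dots,v_m)\sim F$ on $\mathbb{R}^m_{\ge0}$. A mechanism is a pair $(x,\pi)$ with $x:\mathbb{R}^m_{\ge0}\to[0,1]^m$, $\pi:\mathbb{R}^m_{\ge0}\to\mathbb{R}_{\ge0}$; it is truthful if $x(\vec v)\cdot\vec v-\pi(\vec v)\ge x(\vec w)\cdot\vec v-\pi(\vec w)$ and $x(\vec v)\cdot\vec v-\pi(\vec v)\ge0$ for all $\vec v,\vec w$. $\mathrm{REV}(A;F)=\mathbb{E}_{\vec v\sim F}[\pi(\vec v)]$, $\mathrm{OPT}(F)$ is the supremum of $\mathrm{REV}$ over truthful mechanisms. The bundle mechanism sells all items iff $\sum_jv_j$ is at least the drawn price. For $\mu'>0,\sigma'\ge0$, the log-lottery $P^{\log}_{\mu',\sigma'}$ is the random price on $[\pi_1,\pi_2]$ with cdf $x\mapsto\frac{\pi_2\ln(x/\pi_1)-(x-\pi_1)}{\pi_2\ln(\pi_2/\pi_1)-(\pi_2-\pi_1)}$, where $\pi_1,\pi_2$ are the unique solutions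 of $\pi_1(1+\ln(\pi_2/\pi_1))=\mu'$, $\pi_1(2\pi_2-\pi_1)=\mu'^2+\sigma'^2$ (for $\sigma'=0$, the deterministic price $\mu'$). For $s\ge0$, $\rho(s)$ is the unique positive solution $\rho$ of $\frac{1}{\rho^2}(2e^{\rho-1}-1)=s^2+1$. *)

theory Defs
  imports "HOL-Probability.Probability"
begin

definition vals :: "nat \<Rightarrow> (nat \<Rightarrow> real) set" where
  "vals m = PiE {..<m} (\<lambda>_. {0..})"

text \<open>A mechanism is a pair (allocation, payment).\<close>
type_synonym mechanism = "((nat \<Rightarrow> real) \<Rightarrow> nat \<Rightarrow> real) \<times> ((nat \<Rightarrow> real) \<Rightarrow> real)"

definition truthful :: "nat \<Rightarrow> mechanism \<Rightarrow> bool" where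
  "truthful m A = (let x = fst A; p = snd A in
     (\<forall>v\<in>vals m. (\<forall>j<m. 0 \<le> x v j \<and> x v j \<le> 1) \<and> 0 \<le> p v
        \<and> (\<Sum>j<m. x v j * v j) - p v \<ge> 0
        \<and> (\<forall>w\<in>vals m. (\<Sum>j<m. x v j * v j) - p v \<ge> (\<Sum>j<m. x w j * v j) - p w)))"

definition REV :: "(nat \<Rightarrow> real) measure \<Rightarrow> mechanism \<Rightarrow> ennreal" where
  "REV M A = (\<integral>\<^sup>+ v. ennreal (snd A v) \<partial>M)"

definition OPT :: "nat \<Rightarrow> (nat \<Rightarrow> real) measure \<Rightarrow> ennreal" where
  "OPT m M = (SUP A \<in> {A. truthful m A \<and> snd A \<in> borel_measurable M}. REV M A)"

text \<open>Bundle mechanism at a random price drawn from P: all items sold iff the sum of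
  values is at least the drawn price; expressed as a lottery mechanism.\<close>
definition bundle_mech :: "nat \<Rightarrow> real measure \<Rightarrow> mechanism" where
  "bundle_mech m P =
     (\<lambda>v j. measure P {..(\<Sum>i<m. v i)},
      \<lambda>v. \<integral>p. (if p \<le> (\<Sum>i<m. v i) then p else 0) \<partial>P)"

definition loglot_pts :: "real \<Rightarrow> real \<Rightarrow> real \<times> real" where
  "loglot_pts \<mu> \<sigma> = (THE (a, b). 0 < a \<and> 0 < b \<and> a * (1 + ln (b / a)) = \<mu>
                                 \<and> a * (2 * b - a) = \<mu>\<^sup>2 + \<sigma>\<^sup>2)"

definition loglot_cdf :: "real \<Rightarrow> real \<Rightarrow> real \<Rightarrow> real" where
  "loglot_cdf \<mu> \<sigma> x = (case loglot_pts \<mu> \<sigma> of (a, b) \<Rightarrow>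
      if x < a then 0
      else if x \<le> b then (b * ln (x / a) - (x - a)) / (b * ln (b / a) - (b - a))
      else 1)"

definition log_lottery :: "real \<Rightarrow> real \<Rightarrow> real measure" where
  "log_lottery \<mu> \<sigma> = (if \<sigma> = 0 then return borel \<mu> else interval_measure (loglot_cdf \<mu> \<sigma>))"

definition rho :: "real \<Rightarrow> real" where
  "rho s = (THE r. 0 < r \<and> (2 * exp (r - 1) - 1) / r\<^sup>2 = s\<^sup>2 + 1)"

end

theory Submission
  imports Defs "HOL-Real_Asymp.Real_Asymp"
begin


definition fz :: "real \<Rightarrow> real" where "fz u = (2 * exp (u - 1) - 1) / u\<^sup>2"

lemma gpos: fixes u :: real assumes "u \<noteq> 1" shows "exp (u-1) * (u-2) + 1 > 0"
proof (cases "u \<ge> 2")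
  case True
  have "exp (u-1) * (u-2) \<ge> 0" using True by simp
  then show ?thesis by linarith
next
  case False
  have "1 - (u-1) < exp (-(u-1))" using exp_minus_greater[of "u-1"] assms by simp
  then have "exp (u-1) * (2-u) < exp (u-1) * exp (-(u-1))" by simp
  also have "\<dots> = 1" by (simp flip: exp_add)
  finally show ?thesis by (simp add: algebra_simps)
qed

lemma fz_deriv: "u > 0 \<Longrightarrow> DERIV fz u :> 2 * (exp (u-1) * (u-2) + 1) / u^3"
  unfolding fz_def
  apply (rule derivative_eq_intros refl | simp)+
  apply (simp add: field_simps eval_nat_numeral)
  done

lemma fz_cont: "0 < a \<Longrightarrow> continuous_on {a..b} fz"
  by (rule continuous_at_imp_continuous_on) (auto intro!: DERIV_isCont fz_deriv)

lemma fz_mono_aux: assumes "0 < a" "a < b" "a \<ge> 1 \<or> b \<le> 1" shows "fz a < fz b"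
proof (rule DERIV_pos_imp_increasing_open[OF \<open>a < b\<close> _ fz_cont[OF \<open>0<a\<close>]])
  fix x assume x: "a < x" "x < b"
  then have "x \<noteq> 1" "x > 0" using assms by auto
  then show "\<exists>y. DERIV fz x :> y \<and> y > 0"
    using fz_deriv[of x] gpos[of x] by (intro exI[of _ "2 * (exp (x-1) * (x-2) + 1) / x^3"]) auto
qed

lemma fz1: "fz 1 = 1" by (simp add: fz_def)

lemma fz_mono: assumes "0 < a" "a < b" shows "fz a < fz b"
proof (cases "a \<ge> 1 \<or> b \<le> 1")
  case True then show ?thesis using fz_mono_aux assms by blast
next
  case False
  then have "fz a < fz 1" "fz 1 < fz b" using fz_mono_aux[of a 1] fz_mono_aux[of 1 b] assms by auto
  then show ?thesis by linarith
qed

lemma fz_inj: assumes "0 < a" "0 < b" "fz a = fz b" shows "a = b"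
  using fz_mono[of a b] fz_mono[of b a] assms by (cases a b rule: linorder_cases) auto

lemma fz_top: "filterlim fz at_top at_top"
  unfolding fz_def by real_asymp

lemma fz_exists: assumes "c \<ge> 1" shows "\<exists>u\<ge>1. fz u = c"
proof -
  have "eventually (\<lambda>u. fz u \<ge> c) at_top" using fz_top by (simp add: filterlim_at_top)
  then obtain U where U: "\<And>u. u \<ge> U \<Longrightarrow> fz u \<ge> c" by (auto simp: eventually_at_top_linorder)
  define V where "V = max U 1"
  have "fz V \<ge> c" using U V_def by simp
  moreover have "fz 1 \<le> c" using fz1 assms by simp
  ultimately obtain u where "1 \<le> u" "u \<le> V" "fz u = c"
    using IVT'[of fz 1 c V] fz_cont[of 1 V] V_def by auto
  then show ?thesis by auto
qed

lemma rho_eq: assumes "0 < u" "fz u = s\<^sup>2 + 1" shows "rho s = u"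
  unfolding rho_def
proof (rule the_equality)
  show "0 < u \<and> (2 * exp (u - 1) - 1) / u\<^sup>2 = s\<^sup>2 + 1" using assms by (simp add: fz_def)
next
  fix r assume "0 < r \<and> (2 * exp (r - 1) - 1) / r\<^sup>2 = s\<^sup>2 + 1"
  then show "r = u" using fz_inj[of r u] assms by (auto simp: fz_def)
qed

lemma pts_eq:
  assumes mu: "0 < mu" and u: "0 < u" "fz u = 1 + (sg / mu)\<^sup>2"
  shows "loglot_pts mu sg = (mu / u, mu / u * exp (u - 1))"
  unfolding loglot_pts_def
proof (rule the_equality)
  let ?a = "mu / u"
  have "?a * (1 + ln (?a * exp (u - 1) / ?a)) = mu" using mu u by simp
  moreover have "?a * (2 * (?a * exp (u - 1)) - ?a) = mu\<^sup>2 + sg\<^sup>2"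
  proof -
    have "?a * (2 * (?a * exp (u - 1)) - ?a) = mu\<^sup>2 * fz u"
      using u by (simp add: fz_def field_simps power2_eq_square)
    also have "\<dots> = mu\<^sup>2 + sg\<^sup>2" using u mu by (simp add: field_simps power2_eq_square)
    finally show ?thesis .
  qed
  ultimately show "case (?a, ?a * exp (u - 1)) of (a, b) \<Rightarrow> 0 < a \<and> 0 < b \<and> a * (1 + ln (b / a)) = mu \<and> a * (2 * b - a) = mu\<^sup>2 + sg\<^sup>2"
    using mu u by simp
next
  fix p assume "case p of (a, b) \<Rightarrow> 0 < a \<and> 0 < b \<and> a * (1 + ln (b / a)) = mu \<and> a * (2 * b - a) = mu\<^sup>2 + sg\<^sup>2"
  then obtain a b where p: "p = (a, b)" and ab: "0 < a" "0 < b" "a * (1 + ln (b / a)) = mu" "a * (2 * b - a) = mu\<^sup>2 + sg\<^sup>2"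
    by (cases p) auto
  define v where "v = 1 + ln (b / a)"
  have v0: "v > 0" using ab mu v_def by (metis zero_less_mult_pos)
  have bexp: "b = a * exp (v - 1)" using ab v_def by simp
  have av: "a = mu / v" using ab v_def v0 by (simp add: field_simps)
  have "fz v = 1 + (sg / mu)\<^sup>2"
  proof -
    have "mu\<^sup>2 * fz v = a * (2 * b - a)" unfolding bexp av using v0 by (simp add: fz_def field_simps power2_eq_square)
    then have "mu\<^sup>2 * fz v = mu\<^sup>2 + sg\<^sup>2" using ab by simp
    then show ?thesis using mu by (simp add: field_simps power2_eq_square)
  qed
  then have "v = u" using fz_inj[of v u] v0 u by simp
  then show "p = (mu / u, mu / u * exp (u - 1))" using p av bexp by simp
qed



definition Dd :: "real \<Rightarrow> real \<Rightarrow> real" where "Dd a b = b * ln (b / a) - (b - a)"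
definition hh :: "real \<Rightarrow> real \<Rightarrow> real \<Rightarrow> real" where "hh a b y = (b / y - 1) / Dd a b"
definition gg :: "real \<Rightarrow> real \<Rightarrow> real \<Rightarrow> real" where "gg a b y = indicator {a..b} y * hh a b y"
definition GG :: "real \<Rightarrow> real \<Rightarrow> real \<Rightarrow> real" where
  "GG a b x = (if x < a then 0 else if x \<le> b then (b * ln (x / a) - (x - a)) / Dd a b else 1)"
definition PP :: "real \<Rightarrow> real \<Rightarrow> real measure" where "PP a b = density lborel (\<lambda>y. ennreal (gg a b y))"

lemma Dd_pos: assumes "0 < a" "a < b" shows "Dd a b > 0"
proof -
  have "ln a - ln b < (a - b) / b" using ln_diff_less[of a b] assms by simp
  then have "b * (ln a - ln b) < a - b" using assms by (simp add: field_simps)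
  then show ?thesis using assms by (simp add: Dd_def ln_div algebra_simps)
qed

lemma gg_nonneg: assumes "0 < a" "a < b" shows "gg a b y \<ge> 0"
  using Dd_pos[OF assms] assms by (auto simp: gg_def hh_def indicator_def field_simps)

lemma hh_nonneg: assumes "0 < a" "a < b" "a \<le> y" "y \<le> b" shows "hh a b y \<ge> 0"
  using Dd_pos[OF assms(1,2)] assms by (auto simp: hh_def field_simps)

lemma gg_meas[measurable]: "gg a b \<in> borel_measurable borel"
  unfolding gg_def hh_def by measurable

lemma int_h:
  assumes "0 < a" "a < b" "a \<le> c" "c \<le> b"
  shows "integral\<^sup>L lborel (\<lambda>y. indicator {a..c} y * hh a b y) = (b * ln (c / a) - (c - a)) / Dd a b"
proof -
  have "integral\<^sup>L lborel (\<lambda>y. indicator {a..c} y *\<^sub>R hh a b y)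
      = (b * ln (c / a) - (c - a)) / Dd a b - (b * ln (a / a) - (a - a)) / Dd a b"
  proof (rule integral_FTC_atLeastAtMost[OF \<open>a \<le> c\<close>])
    fix x assume x: "a \<le> x" "x \<le> c"
    then have "x > 0" using assms by simp
    have "((\<lambda>y. (b * ln (y / a) - (y - a)) / Dd a b) has_real_derivative hh a b x) (at x)"
      unfolding hh_def using \<open>x > 0\<close> assms Dd_pos[OF assms(1,2)]
      by (auto intro!: derivative_eq_intros simp: field_simps)
    then show "((\<lambda>y. (b * ln (y / a) - (y - a)) / Dd a b) has_vector_derivative hh a b x) (at x within {a..c})"
      by (simp add: has_real_derivative_iff_has_vector_derivative has_vector_derivative_at_within)
  next
    show "continuous_on {a..c} (hh a b)" unfolding hh_def using assms Dd_pos[OF assms(1,2)]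
      by (intro continuous_intros) auto
  qed
  then show ?thesis using assms by simp
qed

lemma int_k:
  assumes "0 < a" "a < b" "a \<le> c" "c \<le> b"
  shows "integral\<^sup>L lborel (\<lambda>y. indicator {a..c} y * ((b - y) / Dd a b)) = (b * c - c\<^sup>2 / 2 - (b * a - a\<^sup>2 / 2)) / Dd a b"
proof -
  have "integral\<^sup>L lborel (\<lambda>y. indicator {a..c} y *\<^sub>R ((b - y) / Dd a b))
      = (b * c - c\<^sup>2 / 2) / Dd a b - (b * a - a\<^sup>2 / 2) / Dd a b"
  proof (rule integral_FTC_atLeastAtMost[OF \<open>a \<le> c\<close>])
    fix x assume x: "a \<le> x" "x \<le> c"
    have "((\<lambda>y. (b * y - y\<^sup>2 / 2) / Dd a b) has_real_derivative (b - x) / Dd a b) (at x)"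
      using Dd_pos[OF assms(1,2)] by (auto intro!: derivative_eq_intros simp: field_simps)
    then show "((\<lambda>y. (b * y - y\<^sup>2 / 2) / Dd a b) has_vector_derivative (b - x) / Dd a b) (at x within {a..c})"
      by (simp add: has_real_derivative_iff_has_vector_derivative has_vector_derivative_at_within)
  next
    show "continuous_on {a..c} (\<lambda>y. (b - y) / Dd a b)" using Dd_pos[OF assms(1,2)] by (intro continuous_intros) auto
  qed
  then show ?thesis by (simp add: diff_divide_distrib)
qed

lemma gg_integrable: "integrable lborel (\<lambda>y. indicator {a..c} y * hh a b y)" if "0 < a" "a < b" for c
proof -
  have "set_integrable lborel {a..c} (hh a b)"
    by (rule borel_integrable_atLeastAtMost') (unfold hh_def, use that Dd_pos[OF that] in \<open>intro continuous_intros, auto\<close>)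
  then show ?thesis by (simp add: set_integrable_def)
qed

lemma k_integrable: "integrable lborel (\<lambda>y. indicator {a..c} y * ((b - y) / Dd a b))" if "0 < a" "a < b" for c
proof -
  have "set_integrable lborel {a..c} (\<lambda>y. (b - y) / Dd a b)"
    by (rule borel_integrable_atLeastAtMost') (use Dd_pos[OF that] in \<open>intro continuous_intros, auto\<close>)
  then show ?thesis by (simp add: set_integrable_def)
qed

lemma PP_cdf_aux:
  assumes "0 < a" "a < b"
  shows "emeasure (PP a b) {..x} = ennreal (GG a b x)"
proof -
  have "emeasure (PP a b) {..x} = (\<integral>\<^sup>+ y. ennreal (gg a b y) * indicator {..x} y \<partial>lborel)"
    unfolding PP_def by (subst emeasure_density) auto
  also have "\<dots> = (\<integral>\<^sup>+ y. ennreal (if x < a then 0 else indicator {a..min x b} y * hh a b y) \<partial>lborel)"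
    by (intro nn_integral_cong) (auto simp: gg_def indicator_def)
  also have "\<dots> = ennreal (GG a b x)"
  proof (cases "x < a")
    case True then show ?thesis by (simp add: GG_def)
  next
    case False
    have "(\<integral>\<^sup>+ y. ennreal (indicator {a..min x b} y * hh a b y) \<partial>lborel)
        = ennreal (integral\<^sup>L lborel (\<lambda>y. indicator {a..min x b} y * hh a b y))"
      using gg_integrable[OF assms, of "min x b"] hh_nonneg[OF assms]
      by (intro nn_integral_eq_integral) (auto simp: indicator_def intro!: AE_I2)
    also have "\<dots> = ennreal (GG a b x)"
      using False assms Dd_pos[OF assms] by (subst int_h) (auto simp: GG_def min_def Dd_def)
    finally show ?thesis using False by simp
  qed
  finally show ?thesis .
qed

lemma GG_nonneg: assumes "0 < a" "a < b" shows "GG a b x \<ge> 0"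
proof -
  have "a \<le> x \<Longrightarrow> x \<le> b \<Longrightarrow> (b * ln (x / a) - (x - a)) / Dd a b \<ge> 0"
    using int_h[OF assms, of x, symmetric] hh_nonneg[OF assms]
    by (auto intro!: integral_nonneg simp: indicator_def)
  then show ?thesis by (auto simp: GG_def)
qed

lemma PP_UNIV: assumes "0 < a" "a < b" shows "emeasure (PP a b) UNIV = 1"
proof -
  have "emeasure (PP a b) UNIV = (\<integral>\<^sup>+ y. ennreal (gg a b y) \<partial>lborel)"
    unfolding PP_def by (subst emeasure_density) auto
  also have "\<dots> = (\<integral>\<^sup>+ y. ennreal (indicator {a..b} y * hh a b y) \<partial>lborel)"
    unfolding gg_def by simp
  also have "\<dots> = ennreal (integral\<^sup>L lborel (\<lambda>y. indicator {a..b} y * hh a b y))"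
      using gg_integrable[OF assms, of b] hh_nonneg[OF assms]
      by (intro nn_integral_eq_integral) (auto simp: indicator_def intro!: AE_I2)
  also have "\<dots> = 1" using int_h[OF assms less_imp_le[OF assms(2)] order_refl] Dd_pos[OF assms] by (simp add: Dd_def)
  finally show ?thesis .
qed

lemma PP_rd: assumes "0 < a" "a < b" shows "real_distribution (PP a b)"
  unfolding real_distribution_def real_distribution_axioms_def
  using PP_UNIV[OF assms] by (auto intro!: prob_spaceI simp: PP_def)

lemma PP_cdf: assumes "0 < a" "a < b" shows "cdf (PP a b) = GG a b"
proof
  fix x
  show "cdf (PP a b) x = GG a b x"
    unfolding cdf_def measure_def using PP_cdf_aux[OF assms, of x] GG_nonneg[OF assms, of x] by simp
qed

lemma PP_eq: assumes "0 < a" "a < b" shows "interval_measure (GG a b) = PP a b"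
proof -
  have rd: "real_distribution (PP a b)" by (rule PP_rd[OF assms])
  then have fb: "finite_borel_measure (PP a b)" by (rule real_distribution.finite_borel_measure_M)
  note c = PP_cdf[OF assms]
  have mono: "\<And>x y. x \<le> y \<Longrightarrow> GG a b x \<le> GG a b y"
    using finite_borel_measure.cdf_nondecreasing[OF fb] c by metis
  have rc: "\<And>x. continuous (at_right x) (GG a b)"
    using finite_borel_measure.cdf_is_right_cont[OF fb] c by metis
  have lb: "(GG a b \<longlongrightarrow> 0) at_bot"
    using finite_borel_measure.cdf_lim_at_bot[OF fb] c by metis
  have lt: "(GG a b \<longlongrightarrow> 1) at_top"
    using real_distribution.cdf_lim_at_top_prob[OF rd] c by metis
  have ci: "cdf (interval_measure (GG a b)) = GG a b" by (rule cdf_interval_measure[OF mono rc lb])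
  show ?thesis
    by (rule cdf_unique[OF real_distribution_interval_measure[OF mono rc lb lt] rd]) (simp_all add: ci c)
qed

definition Qf :: "real \<Rightarrow> real \<Rightarrow> real \<Rightarrow> real" where
  "Qf a b s = (b * s - s\<^sup>2 / 2 - (b * a - a\<^sup>2 / 2)) / Dd a b"

lemma pay_PP: assumes "0 < a" "a < b"
  shows "(\<integral>p. (if p \<le> s then p else 0) \<partial>PP a b) = (if s < a then 0 else Qf a b (min s b))"
proof -
  have "(\<integral>p. (if p \<le> s then p else 0) \<partial>PP a b) = (\<integral>p. gg a b p * (if p \<le> s then p else 0) \<partial>lborel)"
    unfolding PP_def using gg_nonneg[OF assms] by (subst integral_density) auto
  also have "\<dots> = (\<integral>p. (if s < a then 0 else indicator {a..min s b} p * ((b - p) / Dd a b)) \<partial>lborel)"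
  proof (intro Bochner_Integration.integral_cong refl)
    fix p
    show "gg a b p * (if p \<le> s then p else 0) = (if s < a then 0 else indicator {a..min s b} p * ((b - p) / Dd a b))"
      using assms Dd_pos[OF assms] by (cases "a \<le> p") (auto simp: gg_def hh_def indicator_def field_simps)
  qed
  also have "\<dots> = (if s < a then 0 else Qf a b (min s b))"
  proof (cases "s < a")
    case False
    then show ?thesis using int_k[OF assms, of "min s b"] assms by (simp add: Qf_def)
  qed simp
  finally show ?thesis .
qed

lemma Qf_le: assumes "0 < a" "a < b" shows "Qf a b s \<le> (if s < a then 0 else Qf a b (min s b))"
proof -
  have D: "Dd a b > 0" by (rule Dd_pos[OF assms])
  consider "s < a" | "a \<le> s" "s \<le> b" | "b < s" by linarith
  then show ?thesis
  proof cases
    case 1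
    have "b * a - a\<^sup>2 / 2 - (b * s - s\<^sup>2 / 2) = (a - s) * (b - (a + s) / 2)" by (simp add: power2_eq_square field_simps)
    also have "\<dots> \<ge> 0" using 1 assms by (intro mult_nonneg_nonneg) auto
    finally show ?thesis using 1 D by (simp add: Qf_def divide_nonpos_pos)
  next
    case 2 then show ?thesis by simp
  next
    case 3
    have e: "b * b - b\<^sup>2 / 2 - (b * s - s\<^sup>2 / 2) = (s - b)\<^sup>2 / 2" by (simp add: algebra_simps power2_eq_square)
    have "(s - b)\<^sup>2 / 2 \<ge> 0" by simp
    then have "b * s - s\<^sup>2 / 2 - (b * a - a\<^sup>2 / 2) \<le> b * b - b\<^sup>2 / 2 - (b * a - a\<^sup>2 / 2)" using e by linarith
    then show ?thesis using 3 assms D by (simp add: Qf_def divide_right_mono)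
  qed
qed



lemma moments:
  fixes m :: nat and \<mu> \<sigma> :: real and F :: "nat \<Rightarrow> real measure"
  assumes prob: "\<And>j. j < m \<Longrightarrow> prob_space (F j)"
    and sets: "\<And>j. j < m \<Longrightarrow> sets (F j) = sets borel"
    and nonneg: "\<And>j. j < m \<Longrightarrow> (AE x in F j. 0 \<le> x)"
    and sq: "\<And>j. j < m \<Longrightarrow> integrable (F j) (\<lambda>x. x\<^sup>2)"
    and mean: "\<And>j. j < m \<Longrightarrow> prob_space.expectation (F j) (\<lambda>x. x) = \<mu>"
    and var: "\<And>j. j < m \<Longrightarrow> prob_space.variance (F j) (\<lambda>x. x) \<le> \<sigma>\<^sup>2"
  defines "M \<equiv> PiM {..<m} F"
  shows "prob_space M" "integrable M (\<lambda>v. \<Sum>j<m. v j)" "integral\<^sup>L M (\<lambda>v. \<Sum>j<m. v j) = m * \<mu>"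
    "integrable M (\<lambda>v. (\<Sum>j<m. v j)\<^sup>2)" "integral\<^sup>L M (\<lambda>v. (\<Sum>j<m. v j)\<^sup>2) \<le> (m * \<mu>)\<^sup>2 + m * \<sigma>\<^sup>2"
    "AE v in M. v \<in> vals m"
proof -
  let ?I = "{..<m}"
  define F' where "F' j = (if j < m then F j else return borel (0::real))" for j
  have PF: "M = PiM ?I F'" unfolding M_def F'_def by (rule PiM_cong) auto
  have psF': "prob_space (F' j)" for j unfolding F'_def using prob by (auto intro: prob_space_return)
  interpret PS: product_sigma_finite F' unfolding product_sigma_finite_def
    using psF' prob_space_imp_sigma_finite by blast
  show ps: "prob_space M" unfolding M_def by (rule prob_space_PiM) (use prob in auto)
  interpret P: prob_space M by (rule ps)
  have measF: "f \<in> borel_measurable (F j)" if "j < m" "f \<in> borel_measurable borel" for j and f :: "real \<Rightarrow> real"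
    by (subst measurable_cong_sets[OF sets[OF that(1)] refl]) (rule that(2))
  have tr: "integrable M (\<lambda>v. f (v j)) \<and> integral\<^sup>L M (\<lambda>v. f (v j)) = integral\<^sup>L (F j) f"
    if "j < m" "f \<in> borel_measurable borel" "integrable (F j) f" for j and f :: "real \<Rightarrow> real"
  proof -
    have cm: "(\<lambda>v. v j) \<in> measurable M (F j)" unfolding M_def using that(1) by (intro measurable_component_singleton) auto
    have d: "distr M (F j) (\<lambda>v. v j) = F j" unfolding M_def using that(1) prob by (intro distr_PiM_component) auto
    show ?thesis
      using integrable_distr_eq[OF cm measF[OF that(1,2)]] integral_distr[OF cm measF[OF that(1,2)]] d that(3) by simp
  qed
  have int1: "integrable (F j) (\<lambda>x. x)" if "j < m" for j
  proof -
    interpret Fj: prob_space "F j" using prob that by auto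
    have "(\<lambda>x::real. x) \<in> borel_measurable borel" by simp
    from measF[OF that this] show ?thesis by (rule Fj.square_integrable_imp_integrable) (rule sq[OF that])
  qed
  have sq_le: "integral\<^sup>L (F j) (\<lambda>x. x\<^sup>2) \<le> \<sigma>\<^sup>2 + \<mu>\<^sup>2" if "j < m" for j
  proof -
    interpret Fj: prob_space "F j" using prob that by auto
    have "Fj.variance (\<lambda>x. x) = integral\<^sup>L (F j) (\<lambda>x. x\<^sup>2) - \<mu>\<^sup>2"
      using Fj.variance_eq[OF int1[OF that] sq[OF that]] mean[OF that] by simp
    then show ?thesis using var[OF that] by simp
  qed
  have cross: "integrable M (\<lambda>v. v i * v j) \<and> integral\<^sup>L M (\<lambda>v. v i * v j) \<le> \<mu>\<^sup>2 + (if i = j then \<sigma>\<^sup>2 else 0)"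
    if "i < m" "j < m" for i j
  proof (cases "i = j")
    case True
    then show ?thesis using tr[OF that(2) _ sq[OF that(2)]] sq_le[OF that(2)] by (simp add: power2_eq_square)
  next
    case False
    define fk where "fk k x = (if k \<in> {i, j} then x else (1::real))" for k x
    have ifk: "integrable (F' k) (fk k)" if "k \<in> ?I" for k
    proof -
      interpret Fk: prob_space "F' k" by (rule psF')
      show ?thesis
      proof (cases "k \<in> {i,j}")
        case True then show ?thesis using int1[of k] that unfolding fk_def F'_def by auto
      next
        case False then show ?thesis unfolding fk_def by simp
      qed
    qed
    have eqp: "(\<Prod>k\<in>?I. fk k (x k)) = x i * x j" for x :: "nat \<Rightarrow> real"
    proof -
      have "(\<Prod>k\<in>?I. fk k (x k)) = (\<Prod>k\<in>?I \<inter> {i,j}. x k)"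
        by (subst prod.inter_restrict) (auto simp: fk_def intro!: prod.cong)
      also have "?I \<inter> {i,j} = {i,j}" using that by auto
      finally show ?thesis using False by simp
    qed
    have eqi: "(\<Prod>k\<in>?I. integral\<^sup>L (F' k) (fk k)) = \<mu> * \<mu>"
    proof -
      have "(\<Prod>k\<in>?I. integral\<^sup>L (F' k) (fk k)) = (\<Prod>k\<in>?I. if k \<in> {i,j} then \<mu> else 1)"
      proof (intro prod.cong refl)
        fix k assume k: "k \<in> ?I"
        interpret Fk: prob_space "F' k" by (rule psF')
        show "integral\<^sup>L (F' k) (fk k) = (if k \<in> {i,j} then \<mu> else 1)"
        proof (cases "k \<in> {i,j}")
          case True then show ?thesis using mean[of k] k unfolding fk_def F'_def by auto
        next
          case False then show ?thesis unfolding fk_def by (simp add: Fk.prob_space)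
        qed
      qed
      also have "\<dots> = (\<Prod>k\<in>?I \<inter> {i,j}. \<mu>)" by (subst prod.inter_restrict) auto
      also have "?I \<inter> {i,j} = {i,j}" using that by auto
      finally show ?thesis using False by simp
    qed
    have "integrable M (\<lambda>x. (\<Prod>k\<in>?I. fk k (x k)))" unfolding PF by (rule PS.product_integrable_prod) (auto intro: ifk)
    moreover have "integral\<^sup>L M (\<lambda>x. (\<Prod>k\<in>?I. fk k (x k))) = \<mu> * \<mu>"
      unfolding PF by (subst PS.product_integral_prod) (auto intro: ifk simp: eqi)
    ultimately show ?thesis using False by (simp add: eqp power2_eq_square)
  qed
  have c1: "integrable M (\<lambda>v. v j) \<and> integral\<^sup>L M (\<lambda>v. v j) = \<mu>" if "j < m" for j
    using tr[OF that _ int1[OF that]] mean[OF that] by simp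
  show i1: "integrable M (\<lambda>v. \<Sum>j<m. v j)"
    using Bochner_Integration.integrable_sum[where I="{..<m}" and M=M and f="\<lambda>j v. v j"] c1 by simp
  show "integral\<^sup>L M (\<lambda>v. \<Sum>j<m. v j) = m * \<mu>"
    using Bochner_Integration.integral_sum[where I="{..<m}" and M=M and f="\<lambda>j v. v j"] c1 by simp
  have sqeq: "(\<lambda>v::nat\<Rightarrow>real. (\<Sum>j<m. v j)\<^sup>2) = (\<lambda>v. \<Sum>i<m. \<Sum>j<m. v i * v j)"
    by (intro ext) (subst power2_eq_square, rule sum_product)
  have ci: "integrable M (\<lambda>v. \<Sum>j<m. v i * v j)" if "i < m" for i
    by (rule Bochner_Integration.integrable_sum) (use cross that in auto)
  show "integrable M (\<lambda>v. (\<Sum>j<m. v j)\<^sup>2)"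
    unfolding sqeq by (rule Bochner_Integration.integrable_sum) (use ci in auto)
  have "integral\<^sup>L M (\<lambda>v. (\<Sum>j<m. v j)\<^sup>2) = (\<Sum>i<m. integral\<^sup>L M (\<lambda>v. \<Sum>j<m. v i * v j))"
    unfolding sqeq by (rule Bochner_Integration.integral_sum) (use ci in auto)
  also have "\<dots> = (\<Sum>i<m. \<Sum>j<m. integral\<^sup>L M (\<lambda>v. v i * v j))"
    by (intro sum.cong refl Bochner_Integration.integral_sum) (use cross in auto)
  also have "\<dots> \<le> (\<Sum>i<m. \<Sum>j<m. \<mu>\<^sup>2 + (if i = j then \<sigma>\<^sup>2 else 0))"
    using cross by (intro sum_mono) auto
  also have "\<dots> = (m * \<mu>)\<^sup>2 + m * \<sigma>\<^sup>2"
    by (simp add: sum.distrib power2_eq_square algebra_simps)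
  finally show "integral\<^sup>L M (\<lambda>v. (\<Sum>j<m. v j)\<^sup>2) \<le> (m * \<mu>)\<^sup>2 + m * \<sigma>\<^sup>2" .
  have "AE v in M. \<forall>j\<in>?I. 0 \<le> v j"
    unfolding M_def by (rule eventually_ball_finite) (auto intro!: AE_PiM_component prob nonneg)
  moreover have "AE v in M. v \<in> space M" by simp
  ultimately show "AE v in M. v \<in> vals m"
    by eventually_elim (auto simp: vals_def M_def space_PiM PiE_def Pi_def)
qed



theorem corollary1:
  fixes m :: nat and \<mu> \<sigma> :: real and F :: "nat \<Rightarrow> real measure"
  assumes "m \<ge> 1" and "\<mu> > 0" and "\<sigma> \<ge> 0"
    and "\<And>j. j < m \<Longrightarrow> prob_space (F j)"
    and "\<And>j. j < m \<Longrightarrow> sets (F j) = sets borel"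
    and "\<And>j. j < m \<Longrightarrow> (AE x in F j. 0 \<le> x)"
    and "\<And>j. j < m \<Longrightarrow> integrable (F j) (\<lambda>x. x\<^sup>2)"
    and "\<And>j. j < m \<Longrightarrow> prob_space.expectation (F j) (\<lambda>x. x) = \<mu>"
    and "\<And>j. j < m \<Longrightarrow> prob_space.variance (F j) (\<lambda>x. x) \<le> \<sigma>\<^sup>2"
  shows "OPT m (PiM {..<m} F)
         \<le> ennreal (rho ((\<sigma> / \<mu>) / sqrt (real m)))
            * REV (PiM {..<m} F) (bundle_mech m (log_lottery (real m * \<mu>) (sqrt (real m) * \<sigma>)))"
proof -
  define M where "M = PiM {..<m} F"
  define S where "S v = (\<Sum>j<m. v j)" for v :: "nat \<Rightarrow> real"
  define mu' where "mu' = real m * \<mu>"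
  define sg' where "sg' = sqrt (real m) * \<sigma>"
  define s where "s = (\<sigma> / \<mu>) / sqrt (real m)"
  have mom: "prob_space M" "integrable M (\<lambda>v. \<Sum>j<m. v j)" "integral\<^sup>L M (\<lambda>v. \<Sum>j<m. v j) = m * \<mu>"
    "integrable M (\<lambda>v. (\<Sum>j<m. v j)\<^sup>2)" "integral\<^sup>L M (\<lambda>v. (\<Sum>j<m. v j)\<^sup>2) \<le> (m * \<mu>)\<^sup>2 + m * \<sigma>\<^sup>2"
    "AE v in M. v \<in> vals m"
    unfolding M_def using moments[OF assms(4-9)] by auto
  interpret P: prob_space M by (rule mom(1))
  have Seta: "(\<lambda>v. \<Sum>j<m. v j) = S" by (simp add: S_def fun_eq_iff)
  have iS: "integrable M S" using mom(2) Seta by simp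
  have ES: "integral\<^sup>L M S = mu'" using mom(3) Seta mu'_def by simp
  have iS2: "integrable M (\<lambda>v. (S v)\<^sup>2)" using mom(4) by (simp add: S_def)
  have sg2: "sg'\<^sup>2 = real m * \<sigma>\<^sup>2" by (simp add: sg'_def power_mult_distrib)
  have ES2: "integral\<^sup>L M (\<lambda>v. (S v)\<^sup>2) \<le> mu'\<^sup>2 + sg'\<^sup>2" using mom(5) by (simp add: S_def mu'_def sg2)
  have AEv: "AE v in M. v \<in> vals m" by (rule mom(6))
  have AES: "AE v in M. 0 \<le> S v"
    using AEv by eventually_elim (auto simp: vals_def S_def PiE_def Pi_def intro!: sum_nonneg)
  have mu'pos: "mu' > 0" using assms(1,2) by (simp add: mu'_def)
  have opt: "OPT m M \<le> ennreal mu'"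
    unfolding OPT_def
  proof (rule SUP_least)
    fix A assume A: "A \<in> {A. truthful m A \<and> snd A \<in> borel_measurable M}"
    have "REV M A \<le> (\<integral>\<^sup>+ v. ennreal (S v) \<partial>M)"
      unfolding REV_def
    proof (rule nn_integral_mono_AE)
      show "AE v in M. ennreal (snd A v) \<le> ennreal (S v)"
        using AEv
      proof eventually_elim
        case (elim v)
        have nn: "\<And>j. j < m \<Longrightarrow> 0 \<le> v j" using elim by (auto simp: vals_def)
        have tr: "(\<forall>j<m. 0 \<le> fst A v j \<and> fst A v j \<le> 1) \<and> snd A v \<le> (\<Sum>j<m. fst A v j * v j)"
          using A elim unfolding truthful_def Let_def by auto
        have "(\<Sum>j<m. fst A v j * v j) \<le> (\<Sum>j<m. v j)"
          using tr nn by (intro sum_mono) (simp add: mult_left_le_one_le)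
        then show ?case using tr by (intro ennreal_leI) (simp add: S_def)
      qed
    qed
    also have "\<dots> = ennreal (integral\<^sup>L M S)" by (rule nn_integral_eq_integral[OF iS AES])
    finally show "REV M A \<le> ennreal mu'" using ES by simp
  qed
  have "OPT m M \<le> ennreal (rho s) * REV M (bundle_mech m (log_lottery mu' sg'))"
  proof (cases "\<sigma> = 0")
    case True
    then have sg0: "sg' = 0" and s0: "s = 0" by (simp_all add: sg'_def s_def)
    have rho1: "rho s = 1" using rho_eq[of 1 s] fz1 s0 by simp
    have LL: "log_lottery mu' sg' = return borel mu'" by (simp add: log_lottery_def sg0)
    have pay: "snd (bundle_mech m (return borel mu')) v = (if mu' \<le> S v then mu' else 0)" for v
      unfolding bundle_mech_def S_def by (simp add: integral_return)
    have e: "(\<lambda>v. (S v - mu')\<^sup>2) = (\<lambda>v. ((S v)\<^sup>2 - (2 * mu') * S v) + mu'\<^sup>2)"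
      by (rule ext) (simp add: power2_diff algebra_simps)
    have i3: "integrable M (\<lambda>v. (S v - mu')\<^sup>2)" unfolding e using iS iS2 by auto
    have "integral\<^sup>L M (\<lambda>v. (S v - mu')\<^sup>2) = integral\<^sup>L M (\<lambda>v. (S v)\<^sup>2) - 2 * mu' * integral\<^sup>L M S + mu'\<^sup>2"
      unfolding e using iS iS2 by (simp add: Bochner_Integration.integral_diff Bochner_Integration.integral_add P.prob_space)
    also have "\<dots> \<le> 0" using ES ES2 sg0 by (simp add: power2_eq_square)
    finally have le0: "integral\<^sup>L M (\<lambda>v. (S v - mu')\<^sup>2) \<le> 0" .
    have "integral\<^sup>L M (\<lambda>v. (S v - mu')\<^sup>2) \<ge> 0" by (intro Bochner_Integration.integral_nonneg) simp
    with le0 have "integral\<^sup>L M (\<lambda>v. (S v - mu')\<^sup>2) = 0" by linarith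
    then have "AE v in M. (S v - mu')\<^sup>2 = 0"
      using integral_nonneg_eq_0_iff_AE[OF i3] by simp
    then have AEeq: "AE v in M. S v = mu'" by simp
    have "REV M (bundle_mech m (return borel mu')) = (\<integral>\<^sup>+ v. ennreal mu' \<partial>M)"
      unfolding REV_def pay
    proof (intro nn_integral_cong_AE)
      show "AE v in M. ennreal (if mu' \<le> S v then mu' else 0) = ennreal mu'"
        using AEeq by eventually_elim simp
    qed
    also have "\<dots> = ennreal mu'" by (simp add: P.emeasure_space_1)
    finally show ?thesis using opt rho1 LL by simp
  next
    case False
    then have sgpos: "sg' > 0" using assms(1,3) by (simp add: sg'_def)
    define c where "c = 1 + (sg' / mu')\<^sup>2"
    have c1: "c > 1" using sgpos mu'pos by (simp add: c_def)
    obtain u where u1: "u \<ge> 1" and fu: "fz u = c" using fz_exists[of c] c1 by auto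
    have u1': "u > 1" using u1 fu fz1 c1 by (cases "u = 1") auto
    have ss: "sg' / mu' = s"
    proof -
      have m0: "sqrt (real m) > 0" using assms(1) by simp
      have aux: "r * \<sigma> / (r\<^sup>2 * \<mu>) = \<sigma> / \<mu> / r" if "r > 0" for r
        using that assms(2) by (simp add: field_simps power2_eq_square)
      have "(sqrt (real m))\<^sup>2 = real m" by simp
      then show ?thesis unfolding sg'_def mu'_def s_def using aux[OF m0] by simp
    qed
    have rhou: "rho s = u" using rho_eq[of u s] u1' fu c_def ss by simp
    define a where "a = mu' / u"
    define b where "b = a * exp (u - 1)"
    have apos: "a > 0" using mu'pos u1' by (simp add: a_def)
    have ab: "a < b" using apos u1' by (simp add: b_def)
    have pts: "loglot_pts mu' sg' = (a, b)" unfolding a_def b_def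
      by (rule pts_eq[OF mu'pos]) (use u1' fu c_def in auto)
    have lnba: "ln (b / a) = u - 1" using apos by (simp add: b_def)
    have mu'a: "mu' = a * u" using u1' by (simp add: a_def)
    have var_id: "a * (2 * b - a) = mu'\<^sup>2 + sg'\<^sup>2"
    proof -
      have "a * (2 * b - a) = mu'\<^sup>2 * fz u"
        using u1' by (simp add: a_def b_def fz_def field_simps power2_eq_square)
      also have "\<dots> = mu'\<^sup>2 + sg'\<^sup>2" using fu c_def mu'pos by (simp add: field_simps power2_eq_square)
      finally show ?thesis .
    qed
    have cdfeq: "loglot_cdf mu' sg' = GG a b"
      by (rule ext) (simp add: loglot_cdf_def GG_def Dd_def pts)
    have LL: "log_lottery mu' sg' = PP a b"
      using sgpos PP_eq[OF apos ab] by (simp add: log_lottery_def cdfeq)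
    have D: "Dd a b > 0" by (rule Dd_pos[OF apos ab])
    have Dval: "Dd a b = b * (u - 1) - (b - a)" by (simp add: Dd_def lnba)
    have pay: "Qf a b (S v) \<le> snd (bundle_mech m (PP a b)) v" for v
      unfolding bundle_mech_def S_def using pay_PP[OF apos ab] Qf_le[OF apos ab] by simp
    have iQ: "integrable M (\<lambda>v. Qf a b (S v))"
      unfolding Qf_def using iS iS2 by auto
    have EQ: "integral\<^sup>L M (\<lambda>v. Qf a b (S v)) = (b * mu' - integral\<^sup>L M (\<lambda>v. (S v)\<^sup>2) / 2 - (b * a - a\<^sup>2 / 2)) / Dd a b"
      unfolding Qf_def using iS iS2 ES by (simp add: Bochner_Integration.integral_diff P.prob_space)
    have "(b * mu' - (mu'\<^sup>2 + sg'\<^sup>2) / 2 - (b * a - a\<^sup>2 / 2)) = b * mu' - a * (2 * b - a) / 2 - (b * a - a\<^sup>2 / 2)"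
      by (simp only: var_id)
    also have "\<dots> = a * Dd a b" unfolding Dval mu'a by (simp add: field_simps power2_eq_square)
    finally have "(b * mu' - (mu'\<^sup>2 + sg'\<^sup>2) / 2 - (b * a - a\<^sup>2 / 2)) = a * Dd a b" .
    then have EQa: "integral\<^sup>L M (\<lambda>v. Qf a b (S v)) \<ge> a"
      unfolding EQ using ES2 D by (simp add: field_simps)
    have "ennreal a \<le> ennreal (integral\<^sup>L M (\<lambda>v. max 0 (Qf a b (S v))))"
      using EQa iQ by (intro ennreal_leI order.trans[OF EQa] integral_mono) auto
    also have "\<dots> = (\<integral>\<^sup>+ v. ennreal (max 0 (Qf a b (S v))) \<partial>M)"
      using iQ by (intro nn_integral_eq_integral[symmetric]) auto
    also have "\<dots> \<le> REV M (bundle_mech m (PP a b))"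
      unfolding REV_def using pay
      by (intro nn_integral_mono) (auto intro!: ennreal_leI simp: max_def order.trans[OF _ pay])
    finally have rev: "ennreal a \<le> REV M (bundle_mech m (PP a b))" .
    have "OPT m M \<le> ennreal u * ennreal a" using opt mu'a u1' apos by (simp add: ennreal_mult' mult.commute)
    also have "\<dots> \<le> ennreal u * REV M (bundle_mech m (PP a b))" by (intro mult_left_mono rev) auto
    finally show ?thesis using rhou LL by simp
  qed
  then show ?thesis unfolding M_def mu'_def sg'_def s_def .
qed


end
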